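(* Assume the standing hypotheses (P) described in the context and let $\epsilon>0$. For every $\eta\in(0,\frac\beta2)$ there exists $\zeta>0$, depending only on $\epsilon$, $\beta$ and $\tilde H(\epsilon)$ (and independent of $n$), such that for every $\phi\in\mathcal H^{pot}(\epsilon)$ that is not $(\frac\beta2-\eta)$-strongly convex it holds that $P^{(\beta/2)}(\phi)\ge\zeta$.
   Context: Let $d\in\mathbb N$; $\lambda$ is the restriction of Lebesgue measure to $[0,1]^d$, $G_{\#}\lambda$ the pushforward. $\mu^*$ is a probability measure on $[0,1]^d$ with Lebesgue density $p^*$, $p^*>0$ on $[0,1]^d$, $p^*=0$ outside. Neural networks with architecture $(l_0,\dots,l_L)$ and activation $\sigma$ realize $x_0\mapsto W_Lx_{L-1}+B_L$, $x_k=\sigma(W_kx_{k-1}+B_k)$; ReCU: $\sigma(x)=\max\{x,0\}^3$. $C^{k,\alpha}$ are Hölder spaces on $[0,1]^d$ with norms $\|\cdot\|_{C^{k,\alpha}}$; $A\ge B$ means $A-B$ positive semidefinite; $d_{JS}$ is the Jensen–Shannon divergence. Hypotheses (P): $p^*\in C^{1,\alpha}([0,1]^d,\mathbb R)$ for some $\alpha\in(0,1)$; $\phi^*\in C^{3,\alpha}([0,1]^d,\mathbb R)$ is the Brenier potential with $\mu^*=(\nabla\phi^* )_{\#}\lambda$; $M\in(1,\infty)$ with $\frac1M\operatorname{Id}\le\operatorname{Hess}\phi^*\le M\operatorname{Id}$ on $[0,1]^d$, and $\beta:=1/M$. For each $\epsilon>0$, $\phi_\epsilon$ is a ReCU network $[0,1]^d\to\mathbb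 R$ with $\frac1{2M}\operatorname{Id}\le\operatorname{Hess}\phi_\epsilon\le2M\operatorname{Id}$ on $[0,1]^d$ and $d_{JS}(\mu^*,(\nabla\phi_\epsilon)_{\#}\lambda)\le\epsilon$, $\mathcal A^\phi(\epsilon)$ is its architecture, $H(\epsilon)=\|\phi_\epsilon\|_{C^{2,1}}$, $\tilde H(\epsilon)\ge H(\epsilon)$ is fixed, and $\mathcal H^{pot}(\epsilon)$ is the set of all ReCU networks $\phi\colon[0,1]^d\to\mathbb R$ with architecture $\mathcal A^\phi(\epsilon)$ and $\|\phi\|_{C^{2,1}([0,1]^d)}\le\tilde H(\epsilon)$. A function $\phi$ on $[0,1]^d$ is $\kappa$-strongly convex if $\phi(\frac{u+u'}2)\le\frac{\phi(u)+\phi(u')}2-\frac\kappa8\|u-u'\|^2$ for all $u,u'\in[0,1]^d$ (equivalently $\phi+\frac\kappa2\|\cdot\|^2$ is convex). For $\kappa>0$ and $\phi\colon[0,1]^d\to\mathbb R$, $P^{(\kappa)}(\phi)=\int_{([0,1]^d)^2}\mathrm{ReLU}\big(\phi(\frac{u+u'}2)-\frac{\phi(u)+\phi(u')}2+\frac\kappa8\|u-u'\|^2\big)\,du\,du'$, where $\mathrm{ReLU}(x)=\max\{x,0\}$. *)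

theory Defs
  imports "HOL-Analysis.Analysis"
begin

definition unit_cube :: "(real^'d) set" where
  "unit_cube = cbox 0 One"

definition recu :: "real \<Rightarrow> real" where
  "recu x = (max x 0) ^ 3"

definition affine_layer :: "nat \<Rightarrow> (nat \<Rightarrow> nat \<Rightarrow> real) \<Rightarrow> (nat \<Rightarrow> real) \<Rightarrow> (nat \<Rightarrow> real) \<Rightarrow> (nat \<Rightarrow> real)" where
  "affine_layer n W B x = (\<lambda>i. (\<Sum>j<n. W i j * x j) + B i)"

text \<open>Evaluation from hidden layer k on: the architecture argument is the remaining list
  [l_k, l_(k+1), ..., l_L], the input is x_k (already activated), and the parameter list
  contains (W_(k+1),B_(k+1)), ..., (W_L,B_L).\<close>
fun hidden_eval :: "(real \<Rightarrow> real) \<Rightarrow> nat list \<Rightarrow> ((nat \<Rightarrow> nat \<Rightarrow> real) \<times> (nat \<Rightarrow> real)) list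
    \<Rightarrow> (nat \<Rightarrow> real) \<Rightarrow> (nat \<Rightarrow> real)" where
  "hidden_eval \<sigma> (n # m # ns) ((W, B) # ps) x =
     (if ns = [] then affine_layer n W B x
      else hidden_eval \<sigma> (m # ns) ps (\<lambda>i. \<sigma> (affine_layer n W B x i)))"
| "hidden_eval \<sigma> _ _ x = x"

text \<open>Realization of a network with architecture [l_0,...,l_L] (l_0 = d, l_L = 1),
  first layer (W1 rows as vectors in R^d, B1), remaining layers ps.\<close>
definition net_realization :: "(real \<Rightarrow> real) \<Rightarrow> nat list \<Rightarrow> (nat \<Rightarrow> real^'d) \<Rightarrow> (nat \<Rightarrow> real)
    \<Rightarrow> ((nat \<Rightarrow> nat \<Rightarrow> real) \<times> (nat \<Rightarrow> real)) list \<Rightarrow> real^'d \<Rightarrow> real" where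
  "net_realization \<sigma> arch W1 B1 ps x =
     (let z = (\<lambda>i. W1 i \<bullet> x + B1 i) in
      if length arch = 2 then z 0 else hidden_eval \<sigma> (tl arch) ps (\<lambda>i. \<sigma> (z i)) 0)"

definition is_recu_net :: "nat list \<Rightarrow> (real^'d \<Rightarrow> real) \<Rightarrow> bool" where
  "is_recu_net arch \<phi> \<longleftrightarrow>
     length arch \<ge> 2 \<and> hd arch = CARD('d) \<and> last arch = 1 \<and>
     (\<exists>W1 B1 ps. length ps = length arch - 2 \<and>
        (\<forall>x. \<phi> x = net_realization recu arch W1 B1 ps x))"

definition pd :: "'d::finite \<Rightarrow> (real^'d \<Rightarrow> real) \<Rightarrow> real^'d \<Rightarrow> real" where
  "pd i f x = deriv (\<lambda>t. f (x + t *\<^sub>R axis i 1)) 0"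

definition c21_norm :: "(real^'d \<Rightarrow> real) \<Rightarrow> real" where
  "c21_norm f = Sup (
      {\<bar>f x\<bar> | x. x \<in> unit_cube}
    \<union> {\<bar>pd i f x\<bar> | i x. x \<in> unit_cube}
    \<union> {\<bar>pd i (pd j f) x\<bar> | i j x. x \<in> unit_cube}
    \<union> {\<bar>pd i (pd j f) x - pd i (pd j f) y\<bar> / norm (x - y) | i j x y.
         x \<in> unit_cube \<and> y \<in> unit_cube \<and> x \<noteq> y})"

definition strongly_convex_on_cube :: "real \<Rightarrow> (real^'d \<Rightarrow> real) \<Rightarrow> bool" where
  "strongly_convex_on_cube \<kappa> \<phi> \<longleftrightarrow>
     (\<forall>u\<in>unit_cube. \<forall>u'\<in>unit_cube.
        \<phi> ((1/2) *\<^sub>R (u + u')) \<le> (\<phi> u + \<phi> u') / 2 - \<kappa> / 8 * (norm (u - u'))\<^sup>2)"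

definition relu :: "real \<Rightarrow> real" where
  "relu x = max x 0"

definition convexity_penalty :: "real \<Rightarrow> (real^'d \<Rightarrow> real) \<Rightarrow> real" where
  "convexity_penalty \<kappa> \<phi> =
     integral (unit_cube \<times> unit_cube)
       (\<lambda>(u, u'). relu (\<phi> ((1/2) *\<^sub>R (u + u')) - (\<phi> u + \<phi> u') / 2 + \<kappa> / 8 * (norm (u - u'))\<^sup>2))"

definition H_pot :: "nat list \<Rightarrow> real \<Rightarrow> (real^'d \<Rightarrow> real) set" where
  "H_pot arch Ht = {\<phi>. is_recu_net arch \<phi> \<and> c21_norm \<phi> \<le> Ht}"

text \<open>Hessian bounds  a Id <= Hess f <= b Id on the cube (quadratic-form reading of the
  Loewner order).\<close>
definition hess_between :: "real \<Rightarrow> real \<Rightarrow> (real^'d \<Rightarrow> real) \<Rightarrow> bool" where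
  "hess_between a b f \<longleftrightarrow>
     (\<forall>x\<in>unit_cube. \<forall>v::real^'d.
        a * (norm v)\<^sup>2 \<le> (\<Sum>i\<in>UNIV. \<Sum>j\<in>UNIV. v$i * v$j * pd i (pd j f) x) \<and>
        (\<Sum>i\<in>UNIV. \<Sum>j\<in>UNIV. v$i * v$j * pd i (pd j f) x) \<le> b * (norm v)\<^sup>2)"

end

theory Submission
  imports Defs
begin


definition loclip :: "(real^'d \<Rightarrow> real) \<Rightarrow> bool" where
  "loclip g \<longleftrightarrow> (\<forall>r. \<exists>L. \<forall>x y. norm x \<le> r \<longrightarrow> norm y \<le> r \<longrightarrow> \<bar>g x - g y\<bar> \<le> L * norm (x - y))"

definition rlip :: "(real \<Rightarrow> real) \<Rightarrow> bool" where
  "rlip h \<longleftrightarrow> (\<forall>R. \<exists>L. \<forall>a b. \<bar>a\<bar> \<le> R \<longrightarrow> \<bar>b\<bar> \<le> R \<longrightarrow> \<bar>h a - h b\<bar> \<le> L * \<bar>a - b\<bar>)"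

lemma loclip_bounded:
  assumes "loclip g" shows "\<exists>B. \<forall>x. norm x \<le> r \<longrightarrow> \<bar>g x\<bar> \<le> B"
proof -
  obtain L where L: "\<And>x y. norm x \<le> \<bar>r\<bar> \<Longrightarrow> norm y \<le> \<bar>r\<bar> \<Longrightarrow> \<bar>g x - g y\<bar> \<le> L * norm (x - y)"
    using assms unfolding loclip_def by blast
  have "\<bar>g x\<bar> \<le> \<bar>g 0\<bar> + \<bar>L\<bar> * \<bar>r\<bar>" if "norm x \<le> r" for x
  proof -
    have "\<bar>g x - g 0\<bar> \<le> L * norm x" using L[of x 0] that by simp
    also have "\<dots> \<le> \<bar>L\<bar> * norm x" by (simp add: mult_right_mono)
    also have "\<dots> \<le> \<bar>L\<bar> * \<bar>r\<bar>" using that by (intro mult_left_mono) auto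
    finally show ?thesis by linarith
  qed
  then show ?thesis by blast
qed

lemma loclip_const: "loclip (\<lambda>x. c)"
  unfolding loclip_def by (auto intro: exI[of _ 0])

lemma loclip_add: assumes "loclip f" "loclip g" shows "loclip (\<lambda>x. f x + g x)"
  unfolding loclip_def
proof
  fix r
  obtain L1 where L1: "\<And>x y. norm x \<le> r \<Longrightarrow> norm y \<le> r \<Longrightarrow> \<bar>f x - f y\<bar> \<le> L1 * norm (x - y)"
    using assms(1) unfolding loclip_def by blast
  obtain L2 where L2: "\<And>x y. norm x \<le> r \<Longrightarrow> norm y \<le> r \<Longrightarrow> \<bar>g x - g y\<bar> \<le> L2 * norm (x - y)"
    using assms(2) unfolding loclip_def by blast
  show "\<exists>L. \<forall>x y. norm x \<le> r \<longrightarrow> norm y \<le> r \<longrightarrow> \<bar>f x + g x - (f y + g y)\<bar> \<le> L * norm (x - y)"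
  proof (intro exI allI impI)
    fix x y :: "real^'a" assume "norm x \<le> r" "norm y \<le> r"
    then have "\<bar>f x - f y\<bar> \<le> L1 * norm (x - y)" "\<bar>g x - g y\<bar> \<le> L2 * norm (x - y)" using L1 L2 by auto
    then show "\<bar>f x + g x - (f y + g y)\<bar> \<le> (L1 + L2) * norm (x - y)" by (simp add: algebra_simps)
  qed
qed

lemma loclip_mult: assumes "loclip f" "loclip g" shows "loclip (\<lambda>x. f x * g x)"
  unfolding loclip_def
proof
  fix r
  obtain L1 where L1: "\<And>x y. norm x \<le> r \<Longrightarrow> norm y \<le> r \<Longrightarrow> \<bar>f x - f y\<bar> \<le> L1 * norm (x - y)"
    using assms(1) unfolding loclip_def by blast
  obtain L2 where L2: "\<And>x y. norm x \<le> r \<Longrightarrow> norm y \<le> r \<Longrightarrow> \<bar>g x - g y\<bar> \<le> L2 * norm (x - y)"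
    using assms(2) unfolding loclip_def by blast
  obtain B1 where B1: "\<And>x. norm x \<le> r \<Longrightarrow> \<bar>f x\<bar> \<le> B1" using loclip_bounded[OF assms(1)] by blast
  obtain B2 where B2: "\<And>x. norm x \<le> r \<Longrightarrow> \<bar>g x\<bar> \<le> B2" using loclip_bounded[OF assms(2)] by blast
  show "\<exists>L. \<forall>x y. norm x \<le> r \<longrightarrow> norm y \<le> r \<longrightarrow> \<bar>f x * g x - f y * g y\<bar> \<le> L * norm (x - y)"
  proof (intro exI allI impI)
    fix x y :: "real^'a" assume xy: "norm x \<le> r" "norm y \<le> r"
    have e: "f x * g x - f y * g y = f x * (g x - g y) + g y * (f x - f y)" by (simp add: algebra_simps)
    have b1: "0 \<le> B1" using B1[OF xy(1)] by (meson abs_ge_zero order_trans)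
    have b2: "0 \<le> B2" using B2[OF xy(2)] by (meson abs_ge_zero order_trans)
    have 1: "\<bar>f x * (g x - g y)\<bar> \<le> B1 * (L2 * norm (x - y))"
      unfolding abs_mult by (rule mult_mono) (use xy B1 L2 b1 in auto)
    have 2: "\<bar>g y * (f x - f y)\<bar> \<le> B2 * (L1 * norm (x - y))"
      unfolding abs_mult by (rule mult_mono) (use xy B2 L1 b2 in auto)
    show "\<bar>f x * g x - f y * g y\<bar> \<le> (B1 * L2 + B2 * L1) * norm (x - y)"
      unfolding e using 1 2 abs_triangle_ineq[of "f x * (g x - g y)" "g y * (f x - f y)"]
      by (simp add: algebra_simps)
  qed
qed

lemma loclip_inner: "loclip (\<lambda>x. a \<bullet> x)"
  unfolding loclip_def
proof (intro allI exI impI)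
  fix r and x y :: "real^'a"
  have "\<bar>a \<bullet> x - a \<bullet> y\<bar> = \<bar>a \<bullet> (x - y)\<bar>" by (simp add: inner_diff_right)
  also have "\<dots> \<le> norm a * norm (x - y)" by (rule Cauchy_Schwarz_ineq2)
  finally show "\<bar>a \<bullet> x - a \<bullet> y\<bar> \<le> norm a * norm (x - y)" .
qed

lemma loclip_comp: assumes "rlip h" "loclip g" shows "loclip (\<lambda>x. h (g x))"
  unfolding loclip_def
proof
  fix r
  obtain L1 where L1: "\<And>x y. norm x \<le> r \<Longrightarrow> norm y \<le> r \<Longrightarrow> \<bar>g x - g y\<bar> \<le> L1 * norm (x - y)"
    using assms(2) unfolding loclip_def by blast
  obtain B where B: "\<And>x. norm x \<le> r \<Longrightarrow> \<bar>g x\<bar> \<le> B" using loclip_bounded[OF assms(2)] by blast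
  obtain L where L: "\<And>a b. \<bar>a\<bar> \<le> B \<Longrightarrow> \<bar>b\<bar> \<le> B \<Longrightarrow> \<bar>h a - h b\<bar> \<le> L * \<bar>a - b\<bar>"
    using assms(1) unfolding rlip_def by blast
  show "\<exists>L. \<forall>x y. norm x \<le> r \<longrightarrow> norm y \<le> r \<longrightarrow> \<bar>h (g x) - h (g y)\<bar> \<le> L * norm (x - y)"
  proof (intro exI allI impI)
    fix x y :: "real^'a" assume xy: "norm x \<le> r" "norm y \<le> r"
    have "\<bar>h (g x) - h (g y)\<bar> \<le> L * \<bar>g x - g y\<bar>" using L B xy by blast
    also have "\<dots> \<le> \<bar>L\<bar> * (L1 * norm (x - y))"
      by (rule mult_mono) (use xy L1 in auto)
    finally show "\<bar>h (g x) - h (g y)\<bar> \<le> (\<bar>L\<bar> * L1) * norm (x - y)" by simp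
  qed
qed

lemma max0_lip: "\<bar>max a 0 - max b 0\<bar> \<le> \<bar>a - b :: real\<bar>" by linarith

lemma rlip_max: "rlip (\<lambda>t. c * max t 0)"
  unfolding rlip_def
proof (intro allI exI impI)
  fix R a b :: real
  show "\<bar>c * max a 0 - c * max b 0\<bar> \<le> \<bar>c\<bar> * \<bar>a - b\<bar>"
    using max0_lip[of a b] by (simp add: abs_mult flip: right_diff_distrib) (intro mult_left_mono, auto)
qed

lemma rlip_max2: "rlip (\<lambda>t. c * (max t 0)^2)"
  unfolding rlip_def
proof (intro allI exI impI)
  fix R a b :: real assume ab: "\<bar>a\<bar> \<le> R" "\<bar>b\<bar> \<le> R"
  define A where "A = max a 0" define B where "B = max b 0"
  have AB: "0 \<le> A" "A \<le> R" "0 \<le> B" "B \<le> R" "\<bar>A - B\<bar> \<le> \<bar>a - b\<bar>" using ab by (auto simp: A_def B_def)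
  have e: "c * A^2 - c * B^2 = c * ((A - B) * (A + B))" by (simp add: algebra_simps power2_eq_square)
  have "\<bar>c * A^2 - c * B^2\<bar> = \<bar>c\<bar> * (\<bar>A - B\<bar> * (A + B))"
    unfolding e abs_mult using AB by simp
  also have "\<dots> \<le> \<bar>c\<bar> * (\<bar>a - b\<bar> * (2 * R))"
    using AB by (intro mult_left_mono mult_mono) auto
  finally show "\<bar>c * (max a 0)^2 - c * (max b 0)^2\<bar> \<le> (\<bar>c\<bar> * 2 * R) * \<bar>a - b\<bar>"
    by (simp add: A_def B_def algebra_simps)
qed

lemma rlip_recu: "rlip recu"
  unfolding rlip_def recu_def
proof (intro allI exI impI)
  fix R a b :: real assume ab: "\<bar>a\<bar> \<le> R" "\<bar>b\<bar> \<le> R"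
  define A where "A = max a 0" define B where "B = max b 0"
  have AB: "0 \<le> A" "A \<le> R" "0 \<le> B" "B \<le> R" "\<bar>A - B\<bar> \<le> \<bar>a - b\<bar>" using ab by (auto simp: A_def B_def)
  have e: "A^3 - B^3 = (A - B) * (A*A + A*B + B*B)" by (simp add: algebra_simps power3_eq_cube)
  have "A*A + A*B + B*B \<le> R*R + R*R + R*R" using AB by (intro add_mono mult_mono) auto
  then have "\<bar>A^3 - B^3\<bar> \<le> \<bar>a - b\<bar> * (3 * R * R)"
    unfolding e abs_mult using AB
    by (intro mult_mono) (auto intro!: add_nonneg_nonneg)
  then show "\<bar>(max a 0)^3 - (max b 0)^3\<bar> \<le> (3 * R * R) * \<bar>a - b\<bar>"
    by (simp add: A_def B_def algebra_simps)
qed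



lemma deriv0_gen:
  fixes f g :: "real \<Rightarrow> real"
  assumes "f 0 = 0" "\<And>h. h \<noteq> 0 \<Longrightarrow> \<bar>f h / h\<bar> \<le> g h" "(g \<longlongrightarrow> 0) (at 0)"
  shows "(f has_field_derivative 0) (at 0)"
  unfolding DERIV_def
proof -
  have "\<forall>\<^sub>F h in at 0. norm ((f (0 + h) - f 0) / h) \<le> g h"
    using assms(1,2) by (auto simp: eventually_at_filter)
  then show "(\<lambda>h. (f (0 + h) - f 0) / h) \<midarrow>0\<rightarrow> 0"
    by (rule Lim_null_comparison) (rule assms(3))
qed

lemma deriv_pospart:
  fixes p p' f :: "real \<Rightarrow> real"
  assumes f: "\<And>t. f t = (if t > 0 then p t else 0)"
    and p: "\<And>x. (p has_field_derivative p' x) (at x)"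
    and z: "(f has_field_derivative 0) (at 0)"
  shows "(f has_field_derivative (if x > 0 then p' x else 0)) (at x)"
proof (cases "x > 0")
  case True
  have ev: "\<forall>\<^sub>F t in nhds x. f t = p t"
    using eventually_nhds_in_open[of "{0<..}" x] True by (auto simp: f elim!: eventually_mono)
  show ?thesis using DERIV_cong_ev[OF refl ev refl] p True by simp
next
  case False
  show ?thesis
  proof (cases "x = 0")
    case True then show ?thesis using z by simp
  next
    case False
    with \<open>\<not> x > 0\<close> have "x < 0" by simp
    have ev: "\<forall>\<^sub>F t in nhds x. f t = (\<lambda>_. 0) t"
      using eventually_nhds_in_open[of "{..<0}" x] \<open>x < 0\<close> by (auto simp: f elim!: eventually_mono)
    show ?thesis using DERIV_cong_ev[OF refl ev refl] \<open>x < 0\<close> by simp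
  qed
qed

definition rp :: "real \<Rightarrow> real" where "rp t = 3 * (max t 0)^2"
definition rpp :: "real \<Rightarrow> real" where "rpp t = 6 * max t 0"

lemma recu_deriv: "(recu has_field_derivative rp x) (at x)"
proof -
  have z: "(recu has_field_derivative 0) (at 0)"
  proof (rule deriv0_gen[where g = "\<lambda>h. h^2"])
    show "recu 0 = 0" by (simp add: recu_def)
    fix h :: real assume "h \<noteq> 0"
    show "\<bar>recu h / h\<bar> \<le> h^2"
    proof (cases "h > 0")
      case True then show ?thesis by (simp add: recu_def power3_eq_cube power2_eq_square)
    next
      case False then show ?thesis by (simp add: recu_def)
    qed
  next
    show "((\<lambda>h::real. h^2) \<longlongrightarrow> 0) (at 0)"
      using tendsto_power[OF tendsto_ident_at[of "0::real" UNIV], of 2] by simp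
  qed
  have "(recu has_field_derivative (if x > 0 then 3 * x^2 else 0)) (at x)"
    by (rule deriv_pospart[where p = "\<lambda>t. t^3"], simp add: recu_def,
        auto intro!: derivative_eq_intros z)
  moreover have "rp x = (if x > 0 then 3 * x^2 else 0)" by (simp add: rp_def max_def)
  ultimately show ?thesis by simp
qed

lemma rp_deriv: "(rp has_field_derivative rpp x) (at x)"
proof -
  have z: "(rp has_field_derivative 0) (at 0)"
  proof (rule deriv0_gen[where g = "\<lambda>h. 3 * \<bar>h\<bar>"])
    show "rp 0 = 0" by (simp add: rp_def)
    fix h :: real assume "h \<noteq> 0"
    show "\<bar>rp h / h\<bar> \<le> 3 * \<bar>h\<bar>"
    proof (cases "h > 0")
      case True then show ?thesis by (simp add: rp_def power2_eq_square)
    next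
      case False then show ?thesis by (simp add: rp_def)
    qed
  next
    show "((\<lambda>h::real. 3 * \<bar>h\<bar>) \<longlongrightarrow> 0) (at 0)"
      using tendsto_mult[OF tendsto_const[of "3::real"] tendsto_rabs[OF tendsto_ident_at[of "0::real" UNIV]]] by simp
  qed
  have "(rp has_field_derivative (if x > 0 then 6 * x else 0)) (at x)"
    by (rule deriv_pospart[where p = "\<lambda>t. 3 * t^2"], simp add: rp_def,
        auto intro!: derivative_eq_intros z)
  moreover have "rpp x = (if x > 0 then 6 * x else 0)" by (simp add: rpp_def max_def)
  ultimately show ?thesis by simp
qed



definition C2 :: "(real^'d \<Rightarrow> real) \<Rightarrow> bool" where
  "C2 f \<longleftrightarrow> (\<exists>(G :: real^'d \<Rightarrow> real^'d) (H :: real^'d \<Rightarrow> 'd \<Rightarrow> real^'d).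
     loclip f \<and> (\<forall>j. loclip (\<lambda>x. G x $ j)) \<and> (\<forall>i j. loclip (\<lambda>x. H x j $ i)) \<and>
     (\<forall>x. (f has_derivative (\<lambda>h. G x \<bullet> h)) (at x)) \<and>
     (\<forall>x j. ((\<lambda>x. G x $ j) has_derivative (\<lambda>h. H x j \<bullet> h)) (at x)))"

lemma inner0_fun [simp]: "inner (0::real^'d) = (\<lambda>h. 0)" by auto

lemma C2_const: "C2 (\<lambda>x. c)"
  unfolding C2_def
  by (rule exI[of _ "\<lambda>x. 0"], rule exI[of _ "\<lambda>x j. 0"]) (auto simp: loclip_const)

lemma C2_affine: "C2 (\<lambda>x. a \<bullet> x + b)"
  unfolding C2_def
  by (rule exI[of _ "\<lambda>x. a"], rule exI[of _ "\<lambda>x j. 0"])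
     (auto simp: loclip_const intro!: loclip_add loclip_inner derivative_eq_intros)

lemma C2_add: assumes "C2 f" "C2 g" shows "C2 (\<lambda>x. f x + g x)"
proof -
  obtain G1 H1 where 1: "loclip f" "\<forall>j. loclip (\<lambda>x. G1 x $ j)" "\<forall>i j. loclip (\<lambda>x. H1 x j $ i)"
    "\<forall>x. (f has_derivative (\<lambda>h. G1 x \<bullet> h)) (at x)"
    "\<forall>x j. ((\<lambda>x. G1 x $ j) has_derivative (\<lambda>h. H1 x j \<bullet> h)) (at x)"
    using assms(1) unfolding C2_def by blast
  obtain G2 H2 where 2: "loclip g" "\<forall>j. loclip (\<lambda>x. G2 x $ j)" "\<forall>i j. loclip (\<lambda>x. H2 x j $ i)"
    "\<forall>x. (g has_derivative (\<lambda>h. G2 x \<bullet> h)) (at x)"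
    "\<forall>x j. ((\<lambda>x. G2 x $ j) has_derivative (\<lambda>h. H2 x j \<bullet> h)) (at x)"
    using assms(2) unfolding C2_def by blast
  show ?thesis unfolding C2_def
    apply (rule exI[of _ "\<lambda>x. G1 x + G2 x"], rule exI[of _ "\<lambda>x j. H1 x j + H2 x j"])
    using 1 2 by (auto intro!: loclip_add derivative_eq_intros simp: inner_add_left)
qed

lemma C2_cmult: assumes "C2 f" shows "C2 (\<lambda>x. c * f x)"
proof -
  obtain G1 H1 where 1: "loclip f" "\<forall>j. loclip (\<lambda>x. G1 x $ j)" "\<forall>i j. loclip (\<lambda>x. H1 x j $ i)"
    "\<forall>x. (f has_derivative (\<lambda>h. G1 x \<bullet> h)) (at x)"
    "\<forall>x j. ((\<lambda>x. G1 x $ j) has_derivative (\<lambda>h. H1 x j \<bullet> h)) (at x)"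
    using assms(1) unfolding C2_def by blast
  show ?thesis unfolding C2_def
    apply (rule exI[of _ "\<lambda>x. c *\<^sub>R G1 x"], rule exI[of _ "\<lambda>x j. c *\<^sub>R H1 x j"])
    using 1 by (auto intro!: loclip_mult loclip_const derivative_eq_intros)
qed

lemma C2_sum: assumes "finite S" "\<And>k. k \<in> S \<Longrightarrow> C2 (f k)" shows "C2 (\<lambda>x. \<Sum>k\<in>S. f k x)"
  using assms
proof (induction S rule: finite_induct)
  case empty then show ?case by (simp add: C2_const)
next
  case (insert a S) then show ?case by (simp add: C2_add)
qed

lemma C2_recu: assumes "C2 f" shows "C2 (\<lambda>x. recu (f x))"
proof -
  obtain G H where 1: "loclip f" "\<forall>j. loclip (\<lambda>x. G x $ j)" "\<forall>i j. loclip (\<lambda>x. H x j $ i)"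
    "\<forall>x. (f has_derivative (\<lambda>h. G x \<bullet> h)) (at x)"
    "\<forall>x j. ((\<lambda>x. G x $ j) has_derivative (\<lambda>h. H x j \<bullet> h)) (at x)"
    using assms(1) unfolding C2_def by blast
  have rl: "rlip rp" "rlip rpp" using rlip_max2[of 3] rlip_max[of 6]
    by (simp_all add: rp_def[abs_def] rpp_def[abs_def])
  have d1: "((\<lambda>x. recu (f x)) has_derivative (\<lambda>h. (rp (f x) *\<^sub>R G x) \<bullet> h)) (at x)" for x
  proof -
    have "((\<lambda>x. recu (f x)) has_derivative (\<lambda>h. rp (f x) * (G x \<bullet> h))) (at x)"
      using has_derivative_compose[OF 1(4)[rule_format, of x] recu_deriv[of "f x", unfolded has_field_derivative_def]]
      by simp
    then show ?thesis by (simp add: inner_scaleR_left)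
  qed
  have d2: "((\<lambda>x. (rp (f x) *\<^sub>R G x) $ j) has_derivative
      (\<lambda>h. ((rpp (f x) * G x $ j) *\<^sub>R G x + rp (f x) *\<^sub>R H x j) \<bullet> h)) (at x)" for x j
  proof -
    have a: "((\<lambda>x. rp (f x)) has_derivative (\<lambda>h. rpp (f x) * (G x \<bullet> h))) (at x)"
      using has_derivative_compose[OF 1(4)[rule_format, of x] rp_deriv[of "f x", unfolded has_field_derivative_def]]
      by simp
    have "((\<lambda>x. rp (f x) * G x $ j) has_derivative
      (\<lambda>h. rp (f x) * (H x j \<bullet> h) + rpp (f x) * (G x \<bullet> h) * G x $ j)) (at x)"
      by (rule has_derivative_mult[OF a 1(5)[rule_format]])
    then show ?thesis by (simp add: inner_add_left inner_scaleR_left algebra_simps)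
  qed
  have l0: "loclip (\<lambda>x. recu (f x))" by (rule loclip_comp[OF rlip_recu 1(1)])
  have lrp: "loclip (\<lambda>x. rp (f x))" by (rule loclip_comp[OF rl(1) 1(1)])
  have lrpp: "loclip (\<lambda>x. rpp (f x))" by (rule loclip_comp[OF rl(2) 1(1)])
  have l1: "loclip (\<lambda>x. (rp (f x) *\<^sub>R G x) $ j)" for j
    using loclip_mult[OF lrp 1(2)[rule_format, of j]] by simp
  have l2: "loclip (\<lambda>x. ((rpp (f x) * G x $ j) *\<^sub>R G x + rp (f x) *\<^sub>R H x j) $ i)" for i j
  proof -
    have "loclip (\<lambda>x. (rpp (f x) * G x $ j) * G x $ i + rp (f x) * H x j $ i)"
      by (intro loclip_add loclip_mult lrpp lrp 1(2)[rule_format] 1(3)[rule_format])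
    then show ?thesis by simp
  qed
  show ?thesis unfolding C2_def
    apply (rule exI[of _ "\<lambda>x. rp (f x) *\<^sub>R G x"],
           rule exI[of _ "\<lambda>x j. (rpp (f x) * G x $ j) *\<^sub>R G x + rp (f x) *\<^sub>R H x j"])
    using l0 l1 l2 d1 d2 by blast
qed



lemma hidden_id: "ps = [] \<or> length arch < 2 \<Longrightarrow> hidden_eval \<sigma> arch ps z = z"
  by (cases "(\<sigma>, arch, ps, z)" rule: hidden_eval.cases) auto

lemma C2_affine_layer: assumes "\<And>i. C2 (\<lambda>x. y x i)"
  shows "C2 (\<lambda>x. affine_layer n W B (y x) k)"
  unfolding affine_layer_def
  by (intro C2_add C2_const C2_sum C2_cmult assms) simp

lemma hidden_C2:
  assumes "\<And>i. C2 (\<lambda>x. y x i)"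
  shows "C2 (\<lambda>x. hidden_eval recu arch ps (y x) k)"
  using assms
proof (induction ps arbitrary: arch y k)
  case Nil
  then show ?case by (simp add: hidden_id)
next
  case (Cons p ps)
  obtain W B where p: "p = (W, B)" by (cases p)
  show ?case
  proof (cases "length arch < 2")
    case True then show ?thesis using Cons.prems by (simp add: hidden_id)
  next
    case False
    then obtain n m ns where a: "arch = n # m # ns"
      by (cases arch; cases "tl arch") auto
    show ?thesis
    proof (cases "ns = []")
      case True
      then show ?thesis using Cons.prems by (simp add: a p C2_affine_layer)
    next
      case False
      have "C2 (\<lambda>x. hidden_eval recu (m # ns) ps ((\<lambda>x i. recu (affine_layer n W B (y x) i)) x) k)"
        by (rule Cons.IH) (intro C2_recu C2_affine_layer Cons.prems)
      then show ?thesis using False by (simp add: a p)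
    qed
  qed
qed

lemma net_C2: assumes "is_recu_net arch \<phi>" shows "C2 \<phi>"
proof -
  obtain W1 B1 ps where phi: "\<And>x. \<phi> x = net_realization recu arch W1 B1 ps x"
    using assms unfolding is_recu_net_def by blast
  have "C2 (\<lambda>x. net_realization recu arch W1 B1 ps x)"
  proof (cases "length arch = 2")
    case True then show ?thesis by (simp add: net_realization_def C2_affine)
  next
    case False
    have "C2 (\<lambda>x. hidden_eval recu (tl arch) ps ((\<lambda>x i. recu (W1 i \<bullet> x + B1 i)) x) 0)"
      by (rule hidden_C2) (intro C2_recu C2_affine)
    then show ?thesis using False by (simp add: net_realization_def)
  qed
  moreover have "\<phi> = (\<lambda>x. net_realization recu arch W1 B1 ps x)" using phi by auto
  ultimately show ?thesis by simp
qed



lemma One_nth [simp]: "(One::real^'d) $ i = 1"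
proof -
  have "axis i (1::real) \<in> Basis" by simp
  then show ?thesis by (metis cart_eq_inner_axis inner_sum_Basis)
qed

lemma sum_Basis_nth [simp]: "(\<Sum>x\<in>(Basis::(real^'d) set). x $ i) = 1"
  using One_nth[where 'd='d] by (simp only: sum_component)

lemma cube_iff: "x \<in> unit_cube \<longleftrightarrow> (\<forall>i. 0 \<le> x $ i \<and> x $ i \<le> 1)"
  by (simp only: unit_cube_def mem_box_cart One_nth zero_index)

lemma cube_norm: assumes "x \<in> (unit_cube :: (real^'d) set)" shows "norm x \<le> real CARD('d)"
proof -
  have "norm x \<le> (\<Sum>i\<in>UNIV. \<bar>x $ i\<bar>)" by (rule norm_le_l1_cart)
  also have "\<dots> \<le> (\<Sum>i\<in>(UNIV::'d set). 1)" using assms by (intro sum_mono) (auto simp: cube_iff)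
  finally show ?thesis by simp
qed

lemma pd_eq:
  assumes "(f has_derivative (\<lambda>h. G \<bullet> h)) (at x)"
  shows "pd i f x = G $ i"
proof -
  have l: "((\<lambda>t::real. x + t *\<^sub>R axis i 1) has_derivative (\<lambda>t. t *\<^sub>R axis i 1)) (at 0)"
    by (auto intro!: derivative_eq_intros)
  have a: "(f has_derivative (\<lambda>h. G \<bullet> h)) (at (x + 0 *\<^sub>R axis i 1))" using assms by simp
  have "((\<lambda>t. f (x + t *\<^sub>R axis i 1)) has_derivative (\<lambda>t. G \<bullet> (t *\<^sub>R axis i 1))) (at 0)"
    by (rule has_derivative_compose[OF l a])
  then have "((\<lambda>t. f (x + t *\<^sub>R axis i 1)) has_field_derivative G $ i) (at 0)"
    unfolding has_field_derivative_def
    by (rule has_derivative_eq_rhs) (auto simp: inner_axis fun_eq_iff)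
  then show ?thesis unfolding pd_def by (rule DERIV_imp_deriv)
qed

lemma fin_bound:
  fixes g :: "'a::finite \<Rightarrow> 'b \<Rightarrow> real"
  assumes "\<And>i. \<exists>B. \<forall>x. P x \<longrightarrow> \<bar>g i x\<bar> \<le> B"
  shows "\<exists>B. \<forall>i x. P x \<longrightarrow> \<bar>g i x\<bar> \<le> B"
proof -
  obtain B where B: "\<And>i x. P x \<Longrightarrow> \<bar>g i x\<bar> \<le> B i" using assms by metis
  have "B i \<le> (\<Sum>k\<in>UNIV. \<bar>B k\<bar>)" for i
    using member_le_sum[of i UNIV "\<lambda>k. \<bar>B k\<bar>"] by (auto intro: order_trans[OF abs_ge_self])
  then show ?thesis using B by (meson order_trans)
qed

lemma fin_lip:
  fixes g :: "'a::finite \<Rightarrow> 'c::real_normed_vector \<Rightarrow> real"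
  assumes "\<And>i. \<exists>L. \<forall>x y. P x \<longrightarrow> P y \<longrightarrow> \<bar>g i x - g i y\<bar> \<le> L * norm (x - y)"
  shows "\<exists>L. \<forall>i x y. P x \<longrightarrow> P y \<longrightarrow> \<bar>g i x - g i y\<bar> \<le> L * norm (x - y)"
proof -
  obtain L where L: "\<And>i x y. P x \<Longrightarrow> P y \<Longrightarrow> \<bar>g i x - g i y\<bar> \<le> L i * norm (x - y)" using assms by metis
  have "L i \<le> (\<Sum>k\<in>UNIV. \<bar>L k\<bar>)" for i
    using member_le_sum[of i UNIV "\<lambda>k. \<bar>L k\<bar>"] by (auto intro: order_trans[OF abs_ge_self])
  then have "L i * norm (x - y) \<le> (\<Sum>k\<in>UNIV. \<bar>L k\<bar>) * norm (x - y)" for i x y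
    by (intro mult_right_mono) auto
  then show ?thesis using L by (meson order_trans)
qed

lemma c21_facts:
  fixes \<phi> :: "real^'d \<Rightarrow> real"
  assumes "C2 \<phi>" "c21_norm \<phi> \<le> Ht"
  shows "\<exists>(G :: real^'d \<Rightarrow> real^'d) (H :: real^'d \<Rightarrow> 'd \<Rightarrow> real^'d).
     (\<forall>x. (\<phi> has_derivative (\<lambda>h. G x \<bullet> h)) (at x)) \<and>
     (\<forall>x j. ((\<lambda>x. G x $ j) has_derivative (\<lambda>h. H x j \<bullet> h)) (at x)) \<and>
     (\<forall>x\<in>unit_cube. \<forall>i j. \<bar>H x j $ i\<bar> \<le> Ht) \<and>
     (\<forall>x\<in>unit_cube. \<forall>y\<in>unit_cube. \<forall>i j. \<bar>H x j $ i - H y j $ i\<bar> \<le> Ht * norm (x - y))"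
proof -
  obtain G :: "real^'d \<Rightarrow> real^'d" and H :: "real^'d \<Rightarrow> 'd \<Rightarrow> real^'d" where
    1: "loclip \<phi>" "\<forall>j. loclip (\<lambda>x. G x $ j)" "\<forall>i j. loclip (\<lambda>x. H x j $ i)"
    "\<forall>x. (\<phi> has_derivative (\<lambda>h. G x \<bullet> h)) (at x)"
    "\<forall>x j. ((\<lambda>x. G x $ j) has_derivative (\<lambda>h. H x j \<bullet> h)) (at x)"
    using assms(1) unfolding C2_def by blast
  define r where "r = real CARD('d)"
  have pd1: "pd j \<phi> = (\<lambda>x. G x $ j)" for j using 1(4) pd_eq by blast
  have pd2: "pd i (pd j \<phi>) x = H x j $ i" for i j x unfolding pd1 using 1(5) pd_eq by blast
  obtain B0 where B0: "\<And>x. norm x \<le> r \<Longrightarrow> \<bar>\<phi> x\<bar> \<le> B0" using loclip_bounded[OF 1(1)] by blast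
  obtain B1 where B1: "\<And>i x. norm x \<le> r \<Longrightarrow> \<bar>G x $ i\<bar> \<le> B1"
    using fin_bound[where g="\<lambda>i x. G x $ i" and P="\<lambda>x. norm x \<le> r"] loclip_bounded 1(2) by metis
  obtain B2 where B2: "\<And>ij x. norm x \<le> r \<Longrightarrow> \<bar>H x (snd ij) $ (fst ij)\<bar> \<le> B2"
    using fin_bound[where g="\<lambda>ij x. H x (snd ij) $ (fst ij)" and P="\<lambda>x. norm x \<le> r"] loclip_bounded 1(3) by metis
  obtain L where L: "\<And>ij x y. norm x \<le> r \<Longrightarrow> norm y \<le> r \<Longrightarrow>
      \<bar>H x (snd ij) $ (fst ij) - H y (snd ij) $ (fst ij)\<bar> \<le> L * norm (x - y)"
    using fin_lip[where g="\<lambda>ij x. H x (snd ij) $ (fst ij)" and P="\<lambda>x. norm x \<le> r"] 1(3) unfolding loclip_def by metis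
  have cn: "x \<in> unit_cube \<Longrightarrow> norm x \<le> r" for x :: "real^'d" using cube_norm r_def by blast
  define S where "S = ({\<bar>\<phi> x\<bar> | x. x \<in> unit_cube}
    \<union> {\<bar>pd i \<phi> x\<bar> | i x. x \<in> unit_cube}
    \<union> {\<bar>pd i (pd j \<phi>) x\<bar> | i j x. x \<in> unit_cube}
    \<union> {\<bar>pd i (pd j \<phi>) x - pd i (pd j \<phi>) y\<bar> / norm (x - y) | i j x y.
         x \<in> unit_cube \<and> y \<in> unit_cube \<and> x \<noteq> y})"
  have c: "c21_norm \<phi> = Sup S" unfolding c21_norm_def S_def ..
  have q: "\<bar>H x j $ i - H y j $ i\<bar> / norm (x - y) \<le> L" if "x \<in> unit_cube" "y \<in> unit_cube" "x \<noteq> y" for x y i j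
  proof -
    have "\<bar>H x j $ i - H y j $ i\<bar> \<le> L * norm (x - y)" using L[of x y "(i,j)"] cn that by simp
    moreover have "0 < norm (x - y)" using that by simp
    ultimately show ?thesis by (simp add: pos_divide_le_eq mult.commute)
  qed
  define M where "M = max (max B0 B1) (max B2 L)"
  have m: "s \<le> M" if sS: "s \<in> S" for s
  proof -
    consider (a) x where "s = \<bar>\<phi> x\<bar>" "x \<in> unit_cube"
      | (b) i x where "s = \<bar>pd i \<phi> x\<bar>" "x \<in> unit_cube"
      | (c) i j x where "s = \<bar>pd i (pd j \<phi>) x\<bar>" "x \<in> unit_cube"
      | (d) i j x y where "s = \<bar>pd i (pd j \<phi>) x - pd i (pd j \<phi>) y\<bar> / norm (x - y)"
          "x \<in> unit_cube" "y \<in> unit_cube" "x \<noteq> y"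
      using sS unfolding S_def by blast
    then show ?thesis
    proof cases
      case a then show ?thesis using B0[OF cn[OF a(2)]] unfolding M_def by linarith
    next
      case b then show ?thesis using B1[OF cn[OF b(2)], of i] unfolding M_def pd1 by linarith
    next
      case c then show ?thesis using B2[OF cn[OF c(2)], of "(i,j)"] unfolding M_def pd2 by simp
    next
      case d then show ?thesis using q[OF d(2-4), of j i] unfolding M_def pd2 by simp
    qed
  qed
  have bdd: "bdd_above S" unfolding bdd_above_def using m by blast
  have up: "s \<in> S \<Longrightarrow> s \<le> Ht" for s using cSup_upper[OF _ bdd] c assms(2) by fastforce
  show ?thesis
  proof (intro exI conjI ballI allI)
    show "(\<phi> has_derivative (\<lambda>h. G x \<bullet> h)) (at x)" for x using 1(4) by blast
    show "((\<lambda>x. G x $ j) has_derivative (\<lambda>h. H x j \<bullet> h)) (at x)" for x j using 1(5) by blast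
    show "\<bar>H x j $ i\<bar> \<le> Ht" if "x \<in> unit_cube" for x i j
    proof -
      have "\<bar>pd i (pd j \<phi>) x\<bar> \<in> S" unfolding S_def using that by blast
      then show ?thesis using up pd2 by metis
    qed
    show "\<bar>H x j $ i - H y j $ i\<bar> \<le> Ht * norm (x - y)" if "x \<in> unit_cube" "y \<in> unit_cube" for x y i j
    proof (cases "x = y")
      case True then show ?thesis by simp
    next
      case False
      have "\<bar>H x j $ i - H y j $ i\<bar> / norm (x - y) \<le> Ht"
      proof -
        have "\<bar>pd i (pd j \<phi>) x - pd i (pd j \<phi>) y\<bar> / norm (x - y) \<in> S"
          unfolding S_def using that False by blast
        then show ?thesis using up pd2 by metis
      qed
      moreover have "0 < norm (x - y)" using False by simp
      ultimately show ?thesis by (simp add: pos_divide_le_eq mult.commute)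
    qed
  qed
qed



definition Bf :: "(real^'d \<Rightarrow> 'd \<Rightarrow> real^'d) \<Rightarrow> real^'d \<Rightarrow> real^'d \<Rightarrow> real^'d \<Rightarrow> real" where
  "Bf H y a b = (\<Sum>j\<in>UNIV. \<Sum>i\<in>UNIV. a$j * b$i * H y j $ i)"

lemma line_deriv:
  assumes "\<And>x. (f has_derivative (\<lambda>h. g x \<bullet> h)) (at x)"
  shows "((\<lambda>t. f (m + t *\<^sub>R w)) has_field_derivative g (m + t *\<^sub>R w) \<bullet> w) (at t)"
proof -
  have l: "((\<lambda>t::real. m + t *\<^sub>R w) has_derivative (\<lambda>t. t *\<^sub>R w)) (at t)"
    by (auto intro!: derivative_eq_intros)
  have "((\<lambda>t. f (m + t *\<^sub>R w)) has_derivative (\<lambda>\<tau>. g (m + t *\<^sub>R w) \<bullet> (\<tau> *\<^sub>R w))) (at t)"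
    by (rule has_derivative_compose[OF l assms])
  then show ?thesis unfolding has_field_derivative_def
    by (rule has_derivative_eq_rhs) (auto simp: fun_eq_iff)
qed

lemma taylor2:
  fixes \<phi> :: "real^'d \<Rightarrow> real"
  assumes d1: "\<And>x. (\<phi> has_derivative (\<lambda>h. G x \<bullet> h)) (at x)"
    and d2: "\<And>x j. ((\<lambda>x. G x $ j) has_derivative (\<lambda>h. H x j \<bullet> h)) (at x)"
  shows "\<exists>t1 t2. \<bar>t1\<bar> \<le> 1 \<and> \<bar>t2\<bar> \<le> 1 \<and>
    \<phi> (m + w) + \<phi> (m - w) - 2 * \<phi> m = (Bf H (m + t1 *\<^sub>R w) w w + Bf H (m + t2 *\<^sub>R w) w w) / 2"
proof -
  define diff :: "nat \<Rightarrow> real \<Rightarrow> real" where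
    "diff n t = (if n = 0 then \<phi> (m + t *\<^sub>R w) else if n = 1 then G (m + t *\<^sub>R w) \<bullet> w
       else Bf H (m + t *\<^sub>R w) w w)" for n t
  have D0: "(diff 0 has_field_derivative diff 1 t) (at t)" for t
    unfolding diff_def using line_deriv[OF d1, where m=m and w=w and t=t] by simp
  have D1: "(diff 1 has_field_derivative diff 2 t) (at t)" for t
  proof -
    have e: "diff 1 = (\<lambda>t. \<Sum>j\<in>UNIV. G (m + t *\<^sub>R w) $ j * w $ j)"
      by (simp add: diff_def fun_eq_iff inner_vec_def)
    have "((\<lambda>t. \<Sum>j\<in>UNIV. G (m + t *\<^sub>R w) $ j * w $ j) has_field_derivative
        (\<Sum>j\<in>UNIV. (H (m + t *\<^sub>R w) j \<bullet> w) * w $ j)) (at t)"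
      by (intro DERIV_sum DERIV_cmult_right line_deriv[where f = "\<lambda>x. G x $ _"] d2)
    moreover have "(\<Sum>j\<in>UNIV. (H (m + t *\<^sub>R w) j \<bullet> w) * w $ j) = diff 2 t"
      by (simp add: diff_def Bf_def inner_vec_def sum_distrib_left sum_distrib_right algebra_simps)
    ultimately show ?thesis using e by simp
  qed
  have Ds: "\<forall>(n::nat) t. n < 2 \<and> P t \<longrightarrow> (diff n has_field_derivative diff (Suc n) t) (at t)" for P
  proof (intro allI impI)
    fix n :: nat and t assume "n < 2 \<and> P t"
    then have "n = 0 \<or> n = 1" by auto
    then show "(diff n has_field_derivative diff (Suc n) t) (at t)"
      using D0 D1 by (auto simp: numeral_2_eq_2)
  qed
  obtain t1 where t1: "0 < t1" "t1 < 1"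
    "diff 0 1 = (\<Sum>n<2. diff n 0 / fact n * 1 ^ n) + diff 2 t1 / fact 2 * 1 ^ 2"
    using Maclaurin[of 1 2 diff "diff 0"] Ds by auto
  obtain t2 where t2: "-1 < t2" "t2 < 0"
    "diff 0 (-1) = (\<Sum>n<2. diff n 0 / fact n * (-1) ^ n) + diff 2 t2 / fact 2 * (-1) ^ 2"
    using Maclaurin_minus[of "-1" 2 diff "diff 0"] Ds by auto
  have "\<phi> (m + w) + \<phi> (m - w) - 2 * \<phi> m = (diff 2 t1 + diff 2 t2) / 2"
    using t1(3) t2(3) by (simp add: diff_def numeral_2_eq_2 lessThan_Suc)
  then show ?thesis using t1 t2 by (intro exI[of _ t1] exI[of _ t2]) (auto simp: diff_def)
qed



lemma double_sum_bound:
  fixes a b :: "real^'d" and c :: "'d \<Rightarrow> 'd \<Rightarrow> real"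
  assumes "\<And>i j. \<bar>c j i\<bar> \<le> C"
  shows "\<bar>\<Sum>j\<in>UNIV. \<Sum>i\<in>UNIV. a$j * b$i * c j i\<bar> \<le> real CARD('d)^2 * C * norm a * norm b"
proof -
  have C0: "0 \<le> C" using assms[of undefined undefined] by linarith
  have "\<bar>\<Sum>j\<in>UNIV. \<Sum>i\<in>UNIV. a$j * b$i * c j i\<bar> \<le> (\<Sum>j\<in>(UNIV::'d set). \<Sum>i\<in>(UNIV::'d set). \<bar>a$j * b$i * c j i\<bar>)"
    by (rule order_trans[OF sum_abs], rule sum_mono, rule sum_abs)
  also have "\<dots> \<le> (\<Sum>j\<in>(UNIV::'d set). \<Sum>i\<in>(UNIV::'d set). norm a * norm b * C)"
  proof (intro sum_mono)
    fix i j
    show "\<bar>a$j * b$i * c j i\<bar> \<le> norm a * norm b * C"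
      unfolding abs_mult
      by (intro mult_mono component_le_norm_cart assms) (auto simp: C0)
  qed
  also have "\<dots> = real CARD('d)^2 * C * norm a * norm b" by (simp add: power2_eq_square)
  finally show ?thesis .
qed

lemma Bf_diff_left: "Bf H y (a - a') b = Bf H y a b - Bf H y a' b"
  by (simp add: Bf_def algebra_simps sum_subtractf)
lemma Bf_diff_right: "Bf H y a (b - b') = Bf H y a b - Bf H y a b'"
  by (simp add: Bf_def algebra_simps sum_subtractf)
lemma Bf_scale: "Bf H y (c *\<^sub>R a) (c *\<^sub>R a) = c^2 * Bf H y a a"
  by (simp add: Bf_def sum_distrib_left power2_eq_square algebra_simps)

lemma Bf_quad_diff: "Bf H y w w - Bf H y v v = Bf H y (w - v) w + Bf H y v (w - v)"
  by (simp add: Bf_diff_left Bf_diff_right)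

lemma Bf_bound:
  fixes H :: "real^'d \<Rightarrow> 'd \<Rightarrow> real^'d"
  assumes "\<And>i j. \<bar>H x j $ i\<bar> \<le> C"
  shows "\<bar>Bf H x a b\<bar> \<le> real CARD('d)^2 * C * norm a * norm b"
  unfolding Bf_def using double_sum_bound[where c = "\<lambda>j i. H x j $ i", OF assms] by simp

lemma Bf_lip:
  fixes H :: "real^'d \<Rightarrow> 'd \<Rightarrow> real^'d"
  assumes "\<And>i j. \<bar>H x j $ i - H y j $ i\<bar> \<le> C"
  shows "\<bar>Bf H x a b - Bf H y a b\<bar> \<le> real CARD('d)^2 * C * norm a * norm b"
proof -
  have "Bf H x a b - Bf H y a b = (\<Sum>j\<in>UNIV. \<Sum>i\<in>UNIV. a$j * b$i * (H x j $ i - H y j $ i))"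
    by (simp add: Bf_def algebra_simps sum_subtractf)
  then show ?thesis using double_sum_bound[where c = "\<lambda>j i. H x j $ i - H y j $ i", OF assms] by simp
qed



lemma fin_lin: "X/2 - B \<le> Z/2 \<Longrightarrow> q1 \<le> X - Y + 2*A + Y/4 \<Longrightarrow> q2 \<le> X - Y + 2*A + Y/4 \<Longrightarrow>
  B + A = Y/8 \<Longrightarrow> Y/4 \<le> Z/2 - (q1+q2)/(4::real)"
  by (simp add: field_simps)

lemma main_arith:
  fixes \<kappa> \<eta> K D s \<theta> nw nd r1 r2 q1 q2 qe :: real
  assumes "0 < \<eta>" "\<eta> < \<kappa>" "0 < K" "1 \<le> D" "0 < s"
    and th: "\<theta> = \<eta> / (4 * (2 * \<kappa> * D + 3 * K * D^2))"
    and sb: "s \<le> \<eta> / (112 * K * D^3)"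
    and nd: "0 \<le> nd" "nd \<le> D * \<theta> * s"
    and nw: "0 \<le> nw" "nw \<le> 2 * D * s" "s^2 - 2 * s * nd \<le> nw^2"
    and r: "0 \<le> r1" "r1 \<le> 7 * D * s" "0 \<le> r2" "r2 \<le> 7 * D * s"
    and q: "q1 \<le> s^2 * qe + K * nd * (nw + s) + K * r1 * nw^2"
           "q2 \<le> s^2 * qe + K * nd * (nw + s) + K * r2 * nw^2"
    and qe: "qe < \<kappa> - \<eta>"
  shows "s^2 * \<eta> / 4 \<le> \<kappa> / 2 * nw^2 - (q1 + q2) / 4"
proof -
  have D0: "0 < D" using assms by simp
  define X where "X = 2 * \<kappa> * D + 3 * K * D^2"
  have den: "0 < X" unfolding X_def using assms D0 by (simp add: add_pos_pos)
  have th': "\<theta> = \<eta> / (4 * X)" using th X_def by simp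
  have th0: "0 \<le> \<theta>" using th' den assms by simp
  have h5: "\<theta> * X = \<eta> / 4" using th' den by simp
  have sD: "s \<le> D * s" using assms by simp
  have h1: "K * nd * (nw + s) \<le> K * (D * \<theta> * s) * (3 * D * s)"
  proof -
    have "nw + s \<le> 3 * D * s" using nw sD by linarith
    then show ?thesis using assms nd nw by (intro mult_mono mult_left_mono) auto
  qed
  have h2: "K * r * nw^2 \<le> K * (7 * D * s) * (2 * D * s)^2" if "0 \<le> r" "r \<le> 7 * D * s" for r
    using that assms nw by (intro mult_mono mult_left_mono power_mono) auto
  have h3: "s^2 * qe \<le> s^2 * (\<kappa> - \<eta>)" using qe assms by (intro mult_left_mono) auto
  have e2: "K * (7 * D * s) * (2 * D * s)^2 = (28 * K * D^3 * s) * s^2"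
    by (simp add: power2_eq_square power3_eq_cube)
  have h4: "28 * K * D^3 * s \<le> \<eta> / 4"
  proof -
    have p: "0 < 112 * K * D^3" using assms D0 by simp
    have "112 * K * D^3 * s \<le> \<eta>" using sb p by (simp add: field_simps)
    then show ?thesis by simp
  qed
  have h4': "(28 * K * D^3 * s) * s^2 \<le> \<eta> / 4 * s^2" using h4 by (intro mult_right_mono) auto
  have e1: "K * (D * \<theta> * s) * (3 * D * s) = (3 * K * D^2 * \<theta>) * s^2"
    by (simp add: power2_eq_square)
  have nw2: "s^2 - 2 * (D * \<theta>) * s^2 \<le> nw^2"
  proof -
    have "s * nd \<le> s * (D * \<theta> * s)" using nd assms by (intro mult_left_mono) auto
    then show ?thesis using nw(3) by (simp add: power2_eq_square algebra_simps)
  qed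
  have k: "\<kappa> / 2 * (s^2 - 2 * (D * \<theta>) * s^2) \<le> \<kappa> / 2 * nw^2"
    using nw2 assms by (intro mult_left_mono) auto
  have q1': "q1 \<le> s^2 * (\<kappa> - \<eta>) + (3 * K * D^2 * \<theta>) * s^2 + \<eta> / 4 * s^2"
    using q(1) h1 h2[OF r(1,2)] h3 e1 e2 h4' by linarith
  have q2': "q2 \<le> s^2 * (\<kappa> - \<eta>) + (3 * K * D^2 * \<theta>) * s^2 + \<eta> / 4 * s^2"
    using q(2) h1 h2[OF r(3,4)] h3 e1 e2 h4' by linarith
  have a: "\<kappa> * D * \<theta> + 3/2 * K * D^2 * \<theta> = \<eta> / 8"
  proof -
    have "\<kappa> * D * \<theta> + 3/2 * K * D^2 * \<theta> = \<theta> * X / 2" by (simp add: X_def algebra_simps)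
    then show ?thesis using h5 by simp
  qed
  have h5': "(\<kappa> * D * \<theta>) * s^2 + (3/2 * K * D^2 * \<theta>) * s^2 = \<eta> / 8 * s^2"
    using arg_cong[OF a, of "\<lambda>z. z * s^2"] by (simp only: distrib_right)
  have K1: "(\<kappa> * s^2)/2 - (\<kappa> * D * \<theta>) * s^2 \<le> (\<kappa> * nw^2)/2"
    using k by (simp add: algebra_simps)
  have Q1: "q1 \<le> \<kappa> * s^2 - \<eta> * s^2 + 2 * ((3/2 * K * D^2 * \<theta>) * s^2) + (\<eta> * s^2)/4"
    using q1' by (simp add: algebra_simps)
  have Q2: "q2 \<le> \<kappa> * s^2 - \<eta> * s^2 + 2 * ((3/2 * K * D^2 * \<theta>) * s^2) + (\<eta> * s^2)/4"
    using q2' by (simp add: algebra_simps)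
  have A1: "(\<kappa> * D * \<theta>) * s^2 + (3/2 * K * D^2 * \<theta>) * s^2 = (\<eta> * s^2)/8"
    using h5' by simp
  have "(\<eta> * s^2)/4 \<le> (\<kappa> * nw^2)/2 - (q1 + q2)/4"
    using fin_lin[OF K1 Q1 Q2 A1] .
  then show ?thesis by (simp add: algebra_simps)
qed


lemma norm_box_bound:
  fixes a :: "real^'d"
  assumes "\<And>i. \<bar>a $ i\<bar> \<le> c"
  shows "norm a \<le> real CARD('d) * c"
proof -
  have "norm a \<le> (\<Sum>i\<in>UNIV. \<bar>a $ i\<bar>)" by (rule norm_le_l1_cart)
  also have "\<dots> \<le> (\<Sum>i\<in>(UNIV::'d set). c)" using assms by (intro sum_mono) auto
  finally show ?thesis by simp
qed

lemma core:
  fixes \<phi> :: "real^'d \<Rightarrow> real" and G :: "real^'d \<Rightarrow> real^'d" and H :: "real^'d \<Rightarrow> 'd \<Rightarrow> real^'d"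
  assumes d1: "\<And>x. (\<phi> has_derivative (\<lambda>h. G x \<bullet> h)) (at x)"
    and d2: "\<And>x j. ((\<lambda>x. G x $ j) has_derivative (\<lambda>h. H x j \<bullet> h)) (at x)"
    and Hb: "\<And>x i j. x \<in> unit_cube \<Longrightarrow> \<bar>H x j $ i\<bar> \<le> Ht"
    and Hl: "\<And>x y i j. x \<in> unit_cube \<Longrightarrow> y \<in> unit_cube \<Longrightarrow> \<bar>H x j $ i - H y j $ i\<bar> \<le> Ht * norm (x - y)"
    and \<eta>: "0 < \<eta>" "\<eta> < \<kappa>"
    and \<xi>: "\<xi> \<in> unit_cube" and e: "norm e = 1" and qe: "Bf H \<xi> e e < \<kappa> - \<eta>"
    and K: "K = real CARD('d)^2 * (\<bar>Ht\<bar> + 1)" and D: "D = real CARD('d)"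
    and th: "\<theta> = \<eta> / (4 * (2 * \<kappa> * D + 3 * K * D^2))"
    and s: "s = min (1/4) (\<eta> / (112 * K * D^3))"
    and \<rho>: "\<rho> = \<theta> * s"
  shows "\<exists>A B. cbox A (A + \<rho> *\<^sub>R One) \<subseteq> unit_cube \<and> cbox B (B + \<rho> *\<^sub>R One) \<subseteq> unit_cube \<and>
     (\<forall>u\<in>cbox A (A + \<rho> *\<^sub>R One). \<forall>u'\<in>cbox B (B + \<rho> *\<^sub>R One).
        s^2 * \<eta> / 4 \<le> \<phi> ((1/2) *\<^sub>R (u + u')) - (\<phi> u + \<phi> u') / 2 + \<kappa> / 8 * (norm (u - u'))\<^sup>2)"
proof -
  have D1: "1 \<le> D" using D by simp
  have K0: "0 < K" using K by (simp add: add_pos_nonneg)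
  have s0: "0 < s" using s \<eta> K0 D1 by simp
  have s4: "s \<le> 1/4" using s by simp
  have sb: "s \<le> \<eta> / (112 * K * D^3)" using s by simp
  have den: "0 < 2 * \<kappa> * D + 3 * K * D^2" using \<eta> D1 K0 by (simp add: add_pos_pos)
  have th0: "0 < \<theta>" using th den \<eta> by simp
  have th1: "\<theta> \<le> 1"
  proof -
    have "\<eta> \<le> 4 * (2 * \<kappa> * D + 3 * K * D^2)"
    proof -
      have "\<kappa> \<le> \<kappa> * D" using D1 \<eta> by simp
      moreover have "0 \<le> K * D^2" using K0 by simp
      moreover have "2 * \<kappa> * D + 3 * K * D^2 = 2 * (\<kappa> * D) + 3 * (K * D^2)" by simp
      ultimately show ?thesis using \<eta> by (smt (verit))
    qed
    then show ?thesis using th den by (simp add: divide_le_eq)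
  qed
  have \<rho>0: "0 < \<rho>" using \<rho> th0 s0 by simp
  have \<rho>s: "\<rho> \<le> s" using \<rho> th1 s0 by (simp add: mult_le_cancel_right1)
  define t where "t = 4 * s"
  define c0 :: "real^'d" where "c0 = (1/2) *\<^sub>R One"
  define \<xi>' where "\<xi>' = \<xi> + t *\<^sub>R (c0 - \<xi>)"
  define A where "A = \<xi>' - s *\<^sub>R e"
  define B where "B = \<xi>' + s *\<^sub>R e"
  have ecomp: "\<bar>e $ i\<bar> \<le> 1" for i using component_le_norm_cart[of e i] e by simp
  have \<xi>c: "0 \<le> \<xi> $ i \<and> \<xi> $ i \<le> 1" for i using \<xi> cube_iff by blast
  have \<xi>'c: "2 * s \<le> \<xi>' $ i \<and> \<xi>' $ i \<le> 1 - 2 * s" for i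
  proof -
    have "\<xi>' $ i = (1 - t) * \<xi> $ i + t / 2" by (simp add: \<xi>'_def c0_def algebra_simps)
    moreover have "0 \<le> (1 - t) * \<xi> $ i" "(1 - t) * \<xi> $ i \<le> 1 - t"
      using \<xi>c[of i] s4 t_def by (auto intro: mult_nonneg_nonneg mult_left_le)
    ultimately show ?thesis using t_def by auto
  qed
  have boxA: "u \<in> cbox A (A + \<rho> *\<^sub>R One) \<longleftrightarrow> (\<forall>i. 0 \<le> (u - A) $ i \<and> (u - A) $ i \<le> \<rho>)" for u
    by (simp add: mem_box_cart algebra_simps)
  have boxB: "u \<in> cbox B (B + \<rho> *\<^sub>R One) \<longleftrightarrow> (\<forall>i. 0 \<le> (u - B) $ i \<and> (u - B) $ i \<le> \<rho>)" for u
    by (simp add: mem_box_cart algebra_simps)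
  have se: "s * e $ i \<le> s" "- s \<le> s * e $ i" for i
  proof -
    have "\<bar>s * e $ i\<bar> \<le> s" using ecomp[of i] s0 by (simp add: abs_mult mult_left_le)
    then show "s * e $ i \<le> s" "- s \<le> s * e $ i" by linarith+
  qed
  have inA: "cbox A (A + \<rho> *\<^sub>R One) \<subseteq> unit_cube"
  proof
    fix u assume "u \<in> cbox A (A + \<rho> *\<^sub>R One)"
    then have h: "0 \<le> (u - A) $ i \<and> (u - A) $ i \<le> \<rho>" for i using boxA by blast
    have "0 \<le> u $ i \<and> u $ i \<le> 1" for i
    proof -
      have "u $ i = (u - A) $ i + \<xi>' $ i - s * e $ i" by (simp add: A_def)
      then show ?thesis using h[of i] \<xi>'c[of i] se[of i] \<rho>s by linarith
    qed
    then show "u \<in> unit_cube" unfolding cube_iff by blast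
  qed
  have inB: "cbox B (B + \<rho> *\<^sub>R One) \<subseteq> unit_cube"
  proof
    fix u assume "u \<in> cbox B (B + \<rho> *\<^sub>R One)"
    then have h: "0 \<le> (u - B) $ i \<and> (u - B) $ i \<le> \<rho>" for i using boxB by blast
    have "0 \<le> u $ i \<and> u $ i \<le> 1" for i
    proof -
      have "u $ i = (u - B) $ i + \<xi>' $ i + s * e $ i" by (simp add: B_def)
      then show ?thesis using h[of i] \<xi>'c[of i] se[of i] \<rho>s by linarith
    qed
    then show "u \<in> unit_cube" unfolding cube_iff by blast
  qed
  have sD: "s \<le> D * s" using D1 s0 by simp
  have Dts: "D * \<theta> * s \<le> D * s" using th1 D1 s0 by (simp add: mult_le_cancel_right1 mult.assoc)
  have Ht1: "Ht \<le> \<bar>Ht\<bar> + 1" by simp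
  have main: "s^2 * \<eta> / 4 \<le> \<phi> ((1/2) *\<^sub>R (u + u')) - (\<phi> u + \<phi> u') / 2 + \<kappa> / 8 * (norm (u - u'))\<^sup>2"
    if uA: "u \<in> cbox A (A + \<rho> *\<^sub>R One)" and uB: "u' \<in> cbox B (B + \<rho> *\<^sub>R One)" for u u'
  proof -
    define a where "a = u - A"
    define b where "b = u' - B"
    have ac: "0 \<le> a $ i \<and> a $ i \<le> \<rho>" for i using uA boxA a_def by blast
    have bc: "0 \<le> b $ i \<and> b $ i \<le> \<rho>" for i using uB boxB b_def by blast
    have na: "norm a \<le> D * \<rho>" unfolding D
    proof (rule norm_box_bound)
      fix i show "\<bar>a $ i\<bar> \<le> \<rho>" using ac[of i] by linarith
    qed
    have nb: "norm b \<le> D * \<rho>" unfolding D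
    proof (rule norm_box_bound)
      fix i show "\<bar>b $ i\<bar> \<le> \<rho>" using bc[of i] by linarith
    qed
    define m where "m = (1/2) *\<^sub>R (u + u')"
    define w where "w = (1/2) *\<^sub>R (u' - u)"
    have um: "u' = m + w" "u = m - w" unfolding m_def w_def by (simp_all add: vec_eq_iff algebra_simps)
    have nuu: "norm (u - u') = 2 * norm w"
    proof -
      have "u - u' = (-2) *\<^sub>R w" unfolding w_def by (simp add: vec_eq_iff algebra_simps)
      then show ?thesis by simp
    qed
    define \<delta> where "\<delta> = w - s *\<^sub>R e"
    have \<delta>eq: "\<delta> = (1/2) *\<^sub>R (b - a)"
      unfolding \<delta>_def w_def a_def b_def A_def B_def by (simp add: vec_eq_iff algebra_simps)
    have nd: "norm \<delta> \<le> D * \<theta> * s"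
    proof -
      have "norm \<delta> = norm (b - a) / 2" unfolding \<delta>eq by simp
      also have "\<dots> \<le> (norm b + norm a) / 2" using norm_triangle_ineq4[of b a] by simp
      also have "\<dots> \<le> D * \<rho>" using na nb by simp
      finally show ?thesis using \<rho> by (simp add: mult.assoc)
    qed
    have weq: "w = s *\<^sub>R e + \<delta>" unfolding \<delta>_def by simp
    have nw: "norm w \<le> 2 * D * s"
    proof -
      have "norm w \<le> norm (s *\<^sub>R e) + norm \<delta>" unfolding weq by (rule norm_triangle_ineq)
      also have "\<dots> = s + norm \<delta>" using e s0 by simp
      finally show ?thesis using nd Dts sD by linarith
    qed
    have nw2: "s^2 - 2 * s * norm \<delta> \<le> (norm w)^2"
    proof -
      have ee: "e \<bullet> e = 1" using e by (simp add: power2_norm_eq_inner[symmetric])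
      have "(norm w)^2 = w \<bullet> w" by (simp add: power2_norm_eq_inner)
      also have "\<dots> = s^2 * (e \<bullet> e) + 2 * s * (e \<bullet> \<delta>) + \<delta> \<bullet> \<delta>"
        unfolding weq by (simp add: inner_add_left inner_add_right inner_commute power2_eq_square algebra_simps)
      finally have "(norm w)^2 = s^2 + 2 * s * (e \<bullet> \<delta>) + (norm \<delta>)^2"
        using ee by (simp add: power2_norm_eq_inner)
      moreover have "- norm \<delta> \<le> e \<bullet> \<delta>" using Cauchy_Schwarz_ineq2[of e \<delta>] e by simp
      moreover have "s * (- norm \<delta>) \<le> s * (e \<bullet> \<delta>)" using calculation(2) s0 by (intro mult_left_mono) auto
      ultimately show ?thesis by (simp add: algebra_simps)
    qed
    obtain t1 t2 where tt: "\<bar>t1\<bar> \<le> 1" "\<bar>t2\<bar> \<le> 1"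
      "\<phi> (m + w) + \<phi> (m - w) - 2 * \<phi> m = (Bf H (m + t1 *\<^sub>R w) w w + Bf H (m + t2 *\<^sub>R w) w w) / 2"
      using taylor2[OF d1 d2] by blast
    have uc: "u \<in> unit_cube" "u' \<in> unit_cube" using uA uB inA inB by auto
    have ycube: "m + t *\<^sub>R w \<in> unit_cube" if "\<bar>t\<bar> \<le> 1" for t
    proof -
      have eq: "m + t *\<^sub>R w = ((1 - t) / 2) *\<^sub>R u + ((1 + t) / 2) *\<^sub>R u'"
        unfolding m_def w_def by (simp add: vec_eq_iff algebra_simps diff_divide_distrib add_divide_distrib)
      have "0 \<le> (m + t *\<^sub>R w) $ i \<and> (m + t *\<^sub>R w) $ i \<le> 1" for i
      proof -
        have c1: "0 \<le> u $ i" "u $ i \<le> 1" "0 \<le> u' $ i" "u' $ i \<le> 1" using uc cube_iff by blast+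
        have l1: "0 \<le> (1 - t) / 2" "0 \<le> (1 + t) / 2" using that by auto
        have "0 \<le> ((1 - t) / 2) * u $ i" "0 \<le> ((1 + t) / 2) * u' $ i" using c1 l1 by simp_all
        moreover have "((1 - t) / 2) * u $ i \<le> (1 - t) / 2" "((1 + t) / 2) * u' $ i \<le> (1 + t) / 2"
          using c1 l1 by (simp_all add: mult_left_le)
        ultimately show ?thesis unfolding eq by simp
      qed
      then show ?thesis unfolding cube_iff by blast
    qed
    have \<xi>\<xi>': "norm (\<xi>' - \<xi>) \<le> 2 * D * s"
    proof -
      have "norm (c0 - \<xi>) \<le> D * (1/2)" unfolding D
      proof (rule norm_box_bound)
        fix i show "\<bar>(c0 - \<xi>) $ i\<bar> \<le> 1/2" using \<xi>c[of i] by (simp add: c0_def split: abs_split)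
      qed
      moreover have "\<xi>' - \<xi> = t *\<^sub>R (c0 - \<xi>)" unfolding \<xi>'_def by simp
      ultimately show ?thesis using t_def s0 by (simp add: mult_left_mono)
    qed
    have m\<xi>': "m - \<xi>' = (1/2) *\<^sub>R (a + b)"
      unfolding m_def a_def b_def A_def B_def by (simp add: vec_eq_iff algebra_simps)
    have nm: "norm (m - \<xi>') \<le> D * s"
    proof -
      have "norm (m - \<xi>') \<le> (norm a + norm b) / 2" unfolding m\<xi>' using norm_triangle_ineq[of a b] by simp
      also have "\<dots> \<le> D * \<rho>" using na nb by simp
      finally show ?thesis using \<rho> Dts by (simp add: mult.assoc)
    qed
    have rk: "norm (m + t *\<^sub>R w - \<xi>) \<le> 7 * D * s" if "\<bar>t\<bar> \<le> 1" for t
    proof -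
      have "m + t *\<^sub>R w - \<xi> = (m - \<xi>') + t *\<^sub>R w + (\<xi>' - \<xi>)" by simp
      then have "norm (m + t *\<^sub>R w - \<xi>) \<le> norm (m - \<xi>') + norm (t *\<^sub>R w) + norm (\<xi>' - \<xi>)"
        by (metis norm_triangle_le norm_triangle_ineq add_mono order_refl)
      moreover have "norm (t *\<^sub>R w) \<le> norm w" using that by (simp add: mult_left_le_one_le)
      moreover have "2 * D * s = 2 * (D * s)" "7 * D * s = 7 * (D * s)" "0 \<le> D * s" using D1 s0 by simp_all
      ultimately show ?thesis using nm nw \<xi>\<xi>' sD by linarith
    qed
    have qk: "Bf H (m + t *\<^sub>R w) w w \<le> s^2 * Bf H \<xi> e e + K * norm \<delta> * (norm w + s)
        + K * norm (m + t *\<^sub>R w - \<xi>) * (norm w)^2" if "\<bar>t\<bar> \<le> 1" for t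
    proof -
      define y where "y = m + t *\<^sub>R w"
      have yc: "y \<in> unit_cube" using ycube[OF that] y_def by simp
      have l: "\<bar>Bf H y w w - Bf H \<xi> w w\<bar> \<le> real CARD('d)^2 * ((\<bar>Ht\<bar> + 1) * norm (y - \<xi>)) * norm w * norm w"
      proof (rule Bf_lip)
        fix i j
        have "\<bar>H y j $ i - H \<xi> j $ i\<bar> \<le> Ht * norm (y - \<xi>)" using Hl yc \<xi> by blast
        also have "\<dots> \<le> (\<bar>Ht\<bar> + 1) * norm (y - \<xi>)" by (intro mult_right_mono) auto
        finally show "\<bar>H y j $ i - H \<xi> j $ i\<bar> \<le> (\<bar>Ht\<bar> + 1) * norm (y - \<xi>)" .
      qed
      have hb: "\<bar>H \<xi> j $ i\<bar> \<le> \<bar>Ht\<bar> + 1" for i j using Hb[OF \<xi>, of j i] by linarith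
      have b1: "\<bar>Bf H \<xi> \<delta> w\<bar> \<le> K * norm \<delta> * norm w" using Bf_bound[where H=H and x=\<xi>, OF hb] K by simp
      have b2: "\<bar>Bf H \<xi> (s *\<^sub>R e) \<delta>\<bar> \<le> K * s * norm \<delta>" using Bf_bound[where H=H and x=\<xi>, OF hb, of "s *\<^sub>R e" \<delta>] K e s0 by simp
      have sp: "Bf H \<xi> w w = s^2 * Bf H \<xi> e e + Bf H \<xi> \<delta> w + Bf H \<xi> (s *\<^sub>R e) \<delta>"
        using Bf_quad_diff[of H \<xi> w "s *\<^sub>R e"] Bf_scale[of H \<xi> s e] unfolding \<delta>_def by simp
      have "K * norm \<delta> * norm w + K * s * norm \<delta> = K * norm \<delta> * (norm w + s)" by (simp add: algebra_simps)
      moreover have "real CARD('d)^2 * ((\<bar>Ht\<bar> + 1) * norm (y - \<xi>)) * norm w * norm w = K * norm (y - \<xi>) * (norm w)^2"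
        using K by (simp add: power2_eq_square)
      ultimately show ?thesis using l b1 b2 sp unfolding y_def[symmetric] by linarith
    qed
    have F: "\<phi> ((1/2) *\<^sub>R (u + u')) - (\<phi> u + \<phi> u') / 2 + \<kappa> / 8 * (norm (u - u'))\<^sup>2
        = \<kappa> / 2 * (norm w)^2 - (Bf H (m + t1 *\<^sub>R w) w w + Bf H (m + t2 *\<^sub>R w) w w) / 4"
    proof -
      have "(norm (u - u'))\<^sup>2 = 4 * (norm w)^2" unfolding nuu by (simp add: power2_eq_square)
      then show ?thesis using tt(3) unfolding m_def[symmetric] um(1)[symmetric] um(2)[symmetric]
        by (simp add: field_simps)
    qed
    have "s^2 * \<eta> / 4 \<le> \<kappa> / 2 * (norm w)^2 - (Bf H (m + t1 *\<^sub>R w) w w + Bf H (m + t2 *\<^sub>R w) w w) / 4"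
      by (rule main_arith[OF \<eta> K0 D1 s0 th sb norm_ge_zero nd norm_ge_zero nw nw2
            norm_ge_zero rk[OF tt(1)] norm_ge_zero rk[OF tt(2)] qk[OF tt(1)] qk[OF tt(2)] qe])
    then show ?thesis using F by simp
  qed
  show ?thesis using inA inB main by blast
qed


lemma seg_cube:
  assumes "u \<in> unit_cube" "u' \<in> unit_cube" "\<bar>t\<bar> \<le> 1"
  shows "(1/2) *\<^sub>R (u + u') + t *\<^sub>R ((1/2) *\<^sub>R (u' - u)) \<in> unit_cube"
proof -
  have eq: "(1/2) *\<^sub>R (u + u') + t *\<^sub>R ((1/2) *\<^sub>R (u' - u)) = ((1 - t) / 2) *\<^sub>R u + ((1 + t) / 2) *\<^sub>R u'"
    by (simp add: vec_eq_iff algebra_simps diff_divide_distrib add_divide_distrib)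
  have "0 \<le> (((1 - t) / 2) *\<^sub>R u + ((1 + t) / 2) *\<^sub>R u') $ i \<and> (((1 - t) / 2) *\<^sub>R u + ((1 + t) / 2) *\<^sub>R u') $ i \<le> 1" for i
  proof -
    have c1: "0 \<le> u $ i" "u $ i \<le> 1" "0 \<le> u' $ i" "u' $ i \<le> 1" using assms cube_iff by blast+
    have l1: "0 \<le> (1 - t) / 2" "0 \<le> (1 + t) / 2" using assms by auto
    have "0 \<le> ((1 - t) / 2) * u $ i" "0 \<le> ((1 + t) / 2) * u' $ i" using c1 l1 by simp_all
    moreover have "((1 - t) / 2) * u $ i \<le> (1 - t) / 2" "((1 + t) / 2) * u' $ i \<le> (1 + t) / 2"
      using c1 l1 by (simp_all add: mult_left_le)
    ultimately show ?thesis by simp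
  qed
  then show ?thesis unfolding eq cube_iff by blast
qed

lemma lin_aux: "P > (S2 + S1) / 2 - k / 8 * (4 * N) \<Longrightarrow> S1 + S2 - 2 * P = (Q1 + Q2) / 2 \<Longrightarrow>
   Q1 + Q2 < 2 * (k * (N::real))"
  by (simp add: field_simps)

lemma nonconv_point:
  fixes \<phi> :: "real^'d \<Rightarrow> real" and G :: "real^'d \<Rightarrow> real^'d" and H :: "real^'d \<Rightarrow> 'd \<Rightarrow> real^'d"
  assumes d1: "\<And>x. (\<phi> has_derivative (\<lambda>h. G x \<bullet> h)) (at x)"
    and d2: "\<And>x j. ((\<lambda>x. G x $ j) has_derivative (\<lambda>h. H x j \<bullet> h)) (at x)"
    and nc: "\<not> strongly_convex_on_cube k \<phi>"
  shows "\<exists>\<xi>\<in>unit_cube. \<exists>e. norm e = 1 \<and> Bf H \<xi> e e < k"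
proof -
  obtain u u' where uc: "u \<in> unit_cube" "u' \<in> unit_cube"
    and f: "\<phi> ((1/2) *\<^sub>R (u + u')) > (\<phi> u + \<phi> u') / 2 - k / 8 * (norm (u - u'))\<^sup>2"
    using nc unfolding strongly_convex_on_cube_def by force
  define m where "m = (1/2) *\<^sub>R (u + u')"
  define w where "w = (1/2) *\<^sub>R (u' - u)"
  have um: "u' = m + w" "u = m - w" unfolding m_def w_def by (simp_all add: vec_eq_iff algebra_simps)
  have nuu: "(norm (u - u'))\<^sup>2 = 4 * (norm w)^2"
  proof -
    have "u - u' = (-2) *\<^sub>R w" unfolding w_def by (simp add: vec_eq_iff algebra_simps)
    then show ?thesis by (simp add: power2_eq_square)
  qed
  obtain t1 t2 where tt: "\<bar>t1\<bar> \<le> 1" "\<bar>t2\<bar> \<le> 1"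
    "\<phi> (m + w) + \<phi> (m - w) - 2 * \<phi> m = (Bf H (m + t1 *\<^sub>R w) w w + Bf H (m + t2 *\<^sub>R w) w w) / 2"
    using taylor2[OF d1 d2] by blast
  have f2: "\<phi> m > (\<phi> (m - w) + \<phi> (m + w)) / 2 - k / 8 * (4 * (norm w)^2)"
    using f unfolding m_def[symmetric] nuu um(1)[symmetric] um(2)[symmetric] .
  have lt: "Bf H (m + t1 *\<^sub>R w) w w + Bf H (m + t2 *\<^sub>R w) w w < 2 * (k * (norm w)^2)"
    using lin_aux[OF f2 tt(3)] .
  have "\<exists>t. \<bar>t\<bar> \<le> 1 \<and> Bf H (m + t *\<^sub>R w) w w < k * (norm w)^2"
  proof (cases "Bf H (m + t1 *\<^sub>R w) w w < k * (norm w)^2")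
    case True then show ?thesis using tt(1) by blast
  next
    case False then have "Bf H (m + t2 *\<^sub>R w) w w < k * (norm w)^2" using lt by linarith
    then show ?thesis using tt(2) by blast
  qed
  then obtain t where t: "\<bar>t\<bar> \<le> 1" "Bf H (m + t *\<^sub>R w) w w < k * (norm w)^2" by blast
  have w0: "w \<noteq> 0"
  proof
    assume "w = 0" then show False using t(2) by (simp add: Bf_def)
  qed
  define e where "e = (1 / norm w) *\<^sub>R w"
  have ne: "norm e = 1" using w0 unfolding e_def by simp
  have "Bf H (m + t *\<^sub>R w) e e = (1 / norm w)^2 * Bf H (m + t *\<^sub>R w) w w"
    unfolding e_def by (rule Bf_scale)
  also have "\<dots> < (1 / norm w)^2 * (k * (norm w)^2)" using t(2) w0 by (intro mult_strict_left_mono) auto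
  also have "\<dots> = k" using w0 by (simp add: field_simps)
  finally have "Bf H (m + t *\<^sub>R w) e e < k" .
  moreover have "m + t *\<^sub>R w \<in> unit_cube" unfolding m_def w_def by (rule seg_cube[OF uc t(1)])
  ultimately show ?thesis using ne by blast
qed

lemma content_shift: assumes "0 < \<rho>"
  shows "measure lborel (cbox A (A + \<rho> *\<^sub>R (One::real^'d))) = measure lborel (cbox (0::real^'d) (\<rho> *\<^sub>R One))"
proof -
  have ne: "cbox A (A + \<rho> *\<^sub>R (One::real^'d)) \<noteq> {}" "cbox (0::real^'d) (\<rho> *\<^sub>R One) \<noteq> {}"
    using assms by (auto simp: box_ne_empty inner_add_left)
  show ?thesis unfolding content_cbox_if using ne by (simp add: inner_add_left)
qed

lemma content_pos: assumes "0 < \<rho>" shows "0 < measure lborel (cbox (0::real^'d) (\<rho> *\<^sub>R One))"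
  using assms by (simp add: content_pos_lt_eq)

lemma penalty_lower:
  fixes \<phi> :: "real^'d \<Rightarrow> real"
  assumes cont: "\<And>x. isCont \<phi> x" and \<rho>: "0 < \<rho>"
    and inA: "cbox A (A + \<rho> *\<^sub>R One) \<subseteq> unit_cube" and inB: "cbox B (B + \<rho> *\<^sub>R One) \<subseteq> unit_cube"
    and F: "\<forall>u\<in>cbox A (A + \<rho> *\<^sub>R One). \<forall>u'\<in>cbox B (B + \<rho> *\<^sub>R One).
        c \<le> \<phi> ((1/2) *\<^sub>R (u + u')) - (\<phi> u + \<phi> u') / 2 + \<kappa> / 8 * (norm (u - u'))\<^sup>2"
  shows "c * (measure lborel (cbox (0::real^'d) (\<rho> *\<^sub>R One)))^2 \<le> convexity_penalty \<kappa> \<phi>"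
proof -
  define f where "f = (\<lambda>(u, u'). relu (\<phi> ((1/2) *\<^sub>R (u + u')) - (\<phi> u + \<phi> u') / 2 + \<kappa> / 8 * (norm (u - (u'::real^'d)))\<^sup>2))"
  have f': "f = (\<lambda>p. max (\<phi> ((1/2) *\<^sub>R (fst p + snd p)) - (\<phi> (fst p) + \<phi> (snd p)) / 2 + \<kappa> / 8 * (norm (fst p - snd p))\<^sup>2) 0)"
    unfolding f_def relu_def by (simp add: fun_eq_iff split_def)
  have c\<phi>: "continuous_on UNIV \<phi>" using cont by (simp add: continuous_at_imp_continuous_on)
  have cf: "continuous_on UNIV f" unfolding f'
    by (intro continuous_intros continuous_on_compose2[OF c\<phi>]) auto
  define S where "S = cbox (A, B) (A + \<rho> *\<^sub>R One, B + \<rho> *\<^sub>R One)"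
  define T where "T = cbox ((0::real^'d), (0::real^'d)) (One, One)"
  have T: "unit_cube \<times> unit_cube = T" unfolding T_def unit_cube_def cbox_Pair_eq ..
  have ST: "S \<subseteq> T" unfolding S_def cbox_Pair_eq T[symmetric] using inA inB by auto
  have iS: "f integrable_on S" unfolding S_def by (rule integrable_continuous[OF continuous_on_subset[OF cf]]) auto
  have iT: "f integrable_on T" unfolding T_def by (rule integrable_continuous[OF continuous_on_subset[OF cf]]) auto
  have f0: "\<forall>x\<in>T. 0 \<le> f x" unfolding f' by auto
  have "integral S (\<lambda>_. c) \<le> integral S f"
  proof (rule integral_le)
    show "(\<lambda>_. c) integrable_on S" unfolding S_def by (rule integrable_const)
    show "f integrable_on S" by (rule iS)
    show "c \<le> f x" if "x \<in> S" for x
    proof -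
      from that obtain u u' where x: "x = (u, u')" "u \<in> cbox A (A + \<rho> *\<^sub>R One)" "u' \<in> cbox B (B + \<rho> *\<^sub>R One)"
        unfolding S_def cbox_Pair_eq by auto
      then show "c \<le> f x" using F unfolding f_def relu_def by fastforce
    qed
  qed
  also have "\<dots> \<le> integral T f" by (rule integral_subset_le[OF ST iS iT f0])
  also have "\<dots> = convexity_penalty \<kappa> \<phi>" unfolding convexity_penalty_def T[symmetric] f_def ..
  finally have "integral S (\<lambda>_. c) \<le> convexity_penalty \<kappa> \<phi>" .
  moreover have "integral S (\<lambda>_. c) = c * (measure lborel (cbox (0::real^'d) (\<rho> *\<^sub>R One)))^2"
    unfolding S_def integral_const content_Pair content_shift[OF \<rho>] by (simp add: power2_eq_square)
  ultimately show ?thesis by simp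
qed



theorem proposition6:
  fixes M \<epsilon> \<eta> Ht :: real
    and A :: "nat list"
    and \<phi>\<^sub>\<epsilon> :: "real^'d \<Rightarrow> real"
  assumes "M > 1"
    and "\<epsilon> > 0"
    and "is_recu_net A \<phi>\<^sub>\<epsilon>"
    and "hess_between (1 / (2 * M)) (2 * M) \<phi>\<^sub>\<epsilon>"
    and "Ht \<ge> c21_norm \<phi>\<^sub>\<epsilon>"
    and "0 < \<eta>" and "\<eta> < (1 / M) / 2"
  shows "\<exists>\<zeta> > 0. \<forall>\<phi> :: real^'d \<Rightarrow> real \<in> H_pot A Ht.
           \<not> strongly_convex_on_cube ((1 / M) / 2 - \<eta>) \<phi> \<longrightarrow>
           convexity_penalty ((1 / M) / 2) \<phi> \<ge> \<zeta>"
proof -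
  define \<kappa> where "\<kappa> = (1 / M) / 2"
  have \<eta>: "0 < \<eta>" "\<eta> < \<kappa>" using assms unfolding \<kappa>_def by auto
  define K where "K = real CARD('d)^2 * (\<bar>Ht\<bar> + 1)"
  define D where "D = real CARD('d)"
  define \<theta> where "\<theta> = \<eta> / (4 * (2 * \<kappa> * D + 3 * K * D^2))"
  define s where "s = min (1/4) (\<eta> / (112 * K * D^3))"
  define \<rho> where "\<rho> = \<theta> * s"
  have D1: "1 \<le> D" using D_def by simp
  have K0: "0 < K" using K_def by (simp add: add_pos_nonneg)
  have s0: "0 < s" using s_def \<eta> K0 D1 by simp
  have den: "0 < 2 * \<kappa> * D + 3 * K * D^2" using \<eta> D1 K0 by (simp add: add_pos_pos)
  have th0: "0 < \<theta>" using \<theta>_def den \<eta> by simp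
  have \<rho>0: "0 < \<rho>" using \<rho>_def th0 s0 by simp
  define \<zeta> where "\<zeta> = (s^2 * \<eta> / 4) * (measure lborel (cbox (0::real^'d) (\<rho> *\<^sub>R One)))^2"
  have \<zeta>0: "0 < \<zeta>" unfolding \<zeta>_def using s0 \<eta> content_pos[OF \<rho>0, where 'd='d] by simp
  have "convexity_penalty \<kappa> \<phi> \<ge> \<zeta>"
    if \<phi>H: "\<phi> \<in> H_pot A Ht" and nc: "\<not> strongly_convex_on_cube (\<kappa> - \<eta>) \<phi>" for \<phi> :: "real^'d \<Rightarrow> real"
  proof -
    have net: "is_recu_net A \<phi>" and cn: "c21_norm \<phi> \<le> Ht" using \<phi>H unfolding H_pot_def by auto
    obtain G :: "real^'d \<Rightarrow> real^'d" and H :: "real^'d \<Rightarrow> 'd \<Rightarrow> real^'d" where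
      d1: "\<And>x. (\<phi> has_derivative (\<lambda>h. G x \<bullet> h)) (at x)"
      and d2: "\<And>x j. ((\<lambda>x. G x $ j) has_derivative (\<lambda>h. H x j \<bullet> h)) (at x)"
      and Hb: "\<And>x i j. x \<in> unit_cube \<Longrightarrow> \<bar>H x j $ i\<bar> \<le> Ht"
      and Hl: "\<And>x y i j. x \<in> unit_cube \<Longrightarrow> y \<in> unit_cube \<Longrightarrow> \<bar>H x j $ i - H y j $ i\<bar> \<le> Ht * norm (x - y)"
      using c21_facts[OF net_C2[OF net] cn] by blast
    obtain \<xi> e where \<xi>: "\<xi> \<in> unit_cube" and e: "norm e = 1" and qe: "Bf H \<xi> e e < \<kappa> - \<eta>"
      using nonconv_point[OF d1 d2 nc] by blast
    obtain A' B' where boxes: "cbox A' (A' + \<rho> *\<^sub>R One) \<subseteq> unit_cube" "cbox B' (B' + \<rho> *\<^sub>R One) \<subseteq> unit_cube"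
      and F: "\<forall>u\<in>cbox A' (A' + \<rho> *\<^sub>R One). \<forall>u'\<in>cbox B' (B' + \<rho> *\<^sub>R One).
        s^2 * \<eta> / 4 \<le> \<phi> ((1/2) *\<^sub>R (u + u')) - (\<phi> u + \<phi> u') / 2 + \<kappa> / 8 * (norm (u - u'))\<^sup>2"
      using core[OF d1 d2 Hb Hl \<eta> \<xi> e qe K_def D_def \<theta>_def s_def \<rho>_def] by blast
    have cont: "isCont \<phi> x" for x using has_derivative_continuous[OF d1] .
    show ?thesis unfolding \<zeta>_def by (rule penalty_lower[OF cont \<rho>0 boxes F])
  qed
  then show ?thesis using \<zeta>0 unfolding \<kappa>_def by blast
qed

end
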